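(* If $Q$ is a Jordan loop, $x\in Q$ and $n\ge 0$ is an integer with binary expansion $n=\sum_{i=0}^k a_i2^i$ ($a_i\in\{0,1\}$), then $x^{n}=x^{1\cdot a_0}\bigl(x^{2\cdot a_1}\bigl(\cdots\bigl(x^{2^{k-1}\cdot a_{k-1}}\, x^{2^k\cdot a_k}\bigr)\cdots\bigr)\bigr).$
   Context: A loop is a set $Q$ with a binary operation (juxtaposition) and neutral element $e$ such that for all $a,b$ the equations $ax=b$, $ya=b$ have unique solutions. A Jordan loop is a commutative loop satisfying $x^2(yx)=(x^2y)x$. For $k\ge 0$, $x^k$ denotes the right-associated product $x(x(\cdots(xe)\cdots))$ with $k$ factors $x$; in particular $x^0=e$. *)

theory Defs
  imports Main
begin

definition loop :: "'a set \<Rightarrow> ('a \<Rightarrow> 'a \<Rightarrow> 'a) \<Rightarrow> 'a \<Rightarrow> bool" where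
  "loop Q m e \<longleftrightarrow>
     e \<in> Q \<and> (\<forall>a\<in>Q. \<forall>b\<in>Q. m a b \<in> Q) \<and>
     (\<forall>a\<in>Q. m e a = a \<and> m a e = a) \<and>
     (\<forall>a\<in>Q. \<forall>b\<in>Q. \<exists>!x. x \<in> Q \<and> m a x = b) \<and>
     (\<forall>a\<in>Q. \<forall>b\<in>Q. \<exists>!y. y \<in> Q \<and> m y a = b)"

fun lpow :: "('a \<Rightarrow> 'a \<Rightarrow> 'a) \<Rightarrow> 'a \<Rightarrow> 'a \<Rightarrow> nat \<Rightarrow> 'a" where
  "lpow m e x 0 = e"
| "lpow m e x (Suc k) = m x (lpow m e x k)"

definition jordan_loop :: "'a set \<Rightarrow> ('a \<Rightarrow> 'a \<Rightarrow> 'a) \<Rightarrow> 'a \<Rightarrow> bool" where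
  "jordan_loop Q m e \<longleftrightarrow> loop Q m e \<and>
     (\<forall>a\<in>Q. \<forall>b\<in>Q. m a b = m b a) \<and>
     (\<forall>x\<in>Q. \<forall>y\<in>Q. m (lpow m e x 2) (m y x) = m (m (lpow m e x 2) y) x)"

fun rnest :: "('a \<Rightarrow> 'a \<Rightarrow> 'a) \<Rightarrow> 'a \<Rightarrow> 'a list \<Rightarrow> 'a" where
  "rnest m e [] = e"
| "rnest m e [t] = t"
| "rnest m e (t # u # ts) = m t (rnest m e (u # ts))"

end

theory Submission
  imports Defs
begin

lemma lpow_in: "loop Q m e \<Longrightarrow> x \<in> Q \<Longrightarrow> lpow m e x n \<in> Q"
  by (induction n) (auto simp: loop_def)

lemma sq_mult:
  assumes J: "jordan_loop Q m e" and x: "x \<in> Q"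
  shows "m (lpow m e x 2) (lpow m e x n) = lpow m e x (n + 2)"
proof (induction n)
  case 0
  have L: "loop Q m e" using J by (simp add: jordan_loop_def)
  have E: "\<forall>b\<in>Q. m b e = b" using L by (simp add: loop_def)
  have "m (lpow m e x 2) e = lpow m e x 2" using E lpow_in[OF L x] by blast
  then show ?case by (simp only: lpow.simps(1) add_0_left)
next
  case (Suc n)
  have L: "loop Q m e" and C: "\<forall>a\<in>Q. \<forall>b\<in>Q. m a b = m b a"
    and JJ: "\<forall>x\<in>Q. \<forall>y\<in>Q. m (lpow m e x 2) (m y x) = m (m (lpow m e x 2) y) x"
    using J by (auto simp: jordan_loop_def)
  have c1: "m x (lpow m e x n) = m (lpow m e x n) x" using C x lpow_in[OF L x] by blast
  have c2: "m (lpow m e x (n+2)) x = m x (lpow m e x (n+2))" using C x lpow_in[OF L x] by blast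
  have "m (lpow m e x 2) (lpow m e x (Suc n)) = m (lpow m e x 2) (m (lpow m e x n) x)"
    using c1 by (simp only: lpow.simps(2))
  also have "\<dots> = m (m (lpow m e x 2) (lpow m e x n)) x" using JJ x lpow_in[OF L x] by blast
  also have "\<dots> = m (lpow m e x (n+2)) x" using Suc by (simp only:)
  also have "\<dots> = lpow m e x (Suc n + 2)" using c2 by (simp only: add_Suc lpow.simps(2))
  finally show ?case .
qed

lemma sq_pow:
  assumes J: "jordan_loop Q m e" and x: "x \<in> Q"
  shows "lpow m e (lpow m e x 2) t = lpow m e x (2 * t)"
proof (induction t)
  case 0 then show ?case by simp
next
  case (Suc t)
  then show ?case using sq_mult[OF J x, of "2*t"] by (simp add: add.commute)
qed

lemma key:
  assumes J: "jordan_loop Q m e"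
  shows "x \<in> Q \<Longrightarrow> m (lpow m e x (2^i)) (lpow m e x (2^(Suc i) * j)) = lpow m e x (2^i + 2^(Suc i) * j)"
proof (induction i arbitrary: x)
  case 0
  have L: "loop Q m e" using J by (simp add: jordan_loop_def)
  have E: "\<forall>b\<in>Q. m b e = b" using L by (simp add: loop_def)
  have "m x e = x" using E 0 by blast
  then show ?case by simp
next
  case (Suc i)
  have L: "loop Q m e" using J by (simp add: jordan_loop_def)
  have y: "lpow m e x 2 \<in> Q" using lpow_in[OF L Suc.prems] .
  have "m (lpow m e (lpow m e x 2) (2^i)) (lpow m e (lpow m e x 2) (2^(Suc i) * j))
        = lpow m e (lpow m e x 2) (2^i + 2^(Suc i) * j)" using Suc.IH[OF y] .
  then show ?case using sq_pow[OF J Suc.prems]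
    by (simp add: algebra_simps)
qed

lemma main:
  assumes J: "jordan_loop Q m e" and x: "x \<in> Q" and A: "\<forall>i\<le>k. a i \<in> {0, 1}"
  shows "lo \<le> k \<Longrightarrow> rnest m e (map (\<lambda>i. lpow m e x (2 ^ i * a i)) [lo..<Suc k])
     = lpow m e x (\<Sum>i\<in>{lo..k}. a i * 2 ^ i)"
proof (induction "k - lo" arbitrary: lo)
  case 0
  then have "lo = k" by simp
  then show ?case by (simp add: mult.commute)
next
  case (Suc d)
  have L: "loop Q m e" using J by (simp add: jordan_loop_def)
  have lt: "lo < k" using Suc.hyps(2) by arith
  have ih: "rnest m e (map (\<lambda>i. lpow m e x (2 ^ i * a i)) [Suc lo..<Suc k])
     = lpow m e x (\<Sum>i\<in>{Suc lo..k}. a i * 2 ^ i)"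
  proof -
    have "d = k - Suc lo" using Suc.hyps(2) by arith
    moreover have "Suc lo \<le> k" using lt by simp
    ultimately show ?thesis using Suc.hyps(1) by blast
  qed
  have ups2: "[Suc lo..<Suc k] = Suc lo # [Suc (Suc lo)..<Suc k]"
    using lt by (intro upt_conv_Cons) simp
  have ups: "[lo..<Suc k] = lo # [Suc lo..<Suc k]"
    using lt by (intro upt_conv_Cons) simp
  have split: "(\<Sum>i\<in>{lo..k}. a i * 2 ^ i) = a lo * 2^lo + (\<Sum>i\<in>{Suc lo..k}. a i * 2 ^ i)"
    using lt by (simp add: sum.atLeast_Suc_atMost)
  have "2^(Suc lo) dvd (\<Sum>i\<in>{Suc lo..k}. a i * 2 ^ i)"
  proof (rule dvd_sum)
    fix i assume "i \<in> {Suc lo..k}"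
    then have "2^Suc lo dvd (2::nat)^i" by (intro le_imp_power_dvd) simp
    then show "2^Suc lo dvd a i * 2^i" by (rule dvd_mult)
  qed
  then obtain j where j: "(\<Sum>i\<in>{Suc lo..k}. a i * 2 ^ i) = 2^(Suc lo) * j" by blast
  have lhs: "rnest m e (map (\<lambda>i. lpow m e x (2 ^ i * a i)) [lo..<Suc k])
     = m (lpow m e x (2 ^ lo * a lo)) (lpow m e x (2^(Suc lo) * j))"
  proof -
    have "rnest m e (map (\<lambda>i. lpow m e x (2 ^ i * a i)) [lo..<Suc k])
      = m (lpow m e x (2 ^ lo * a lo)) (rnest m e (map (\<lambda>i. lpow m e x (2 ^ i * a i)) [Suc lo..<Suc k]))"
      unfolding ups unfolding ups2 by simp
    then show ?thesis using ih j by simp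
  qed
  have "a lo \<in> {0,1}" using A lt by simp
  then show ?case
  proof
    assume "a lo = 0"
    have E: "\<forall>b\<in>Q. m e b = b" using L by (simp add: loop_def)
    have "m e (lpow m e x (2^(Suc lo) * j)) = lpow m e x (2^(Suc lo) * j)"
      using E lpow_in[OF L x] by blast
    then show ?thesis using lhs split j \<open>a lo = 0\<close> by simp
  next
    assume "a lo \<in> {1}"
    then show ?thesis using lhs split j key[OF J x] by simp
  qed
qed

theorem corollary2p3:
  fixes Q :: "'a set" and m :: "'a \<Rightarrow> 'a \<Rightarrow> 'a" and e x :: 'a
    and n k :: nat and a :: "nat \<Rightarrow> nat"
  assumes "jordan_loop Q m e"
    and "x \<in> Q"
    and "\<forall>i\<le>k. a i \<in> {0, 1}"
    and "n = (\<Sum>i\<le>k. a i * 2 ^ i)"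
  shows "lpow m e x n = rnest m e (map (\<lambda>i. lpow m e x (2 ^ i * a i)) [0..<Suc k])"
  using main[OF assms(1-3), of 0] assms(4) by (simp add: atMost_atLeast0)

end
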